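(* Let $X$ be a set with at least three points, let $z_1\ne z_2$ be complex numbers, and let $f:\mathcal{P}(X)\setminus\{\varnothing\}\to\{z_1,z_2\}$ be a surjection such that $f(A)+f(B)=f(A\cup B)$ for all nonempty $A,B\subseteq X$ with $A\cap B=\varnothing$. Then $0\in\{z_1,z_2\}$, the family $f^{-1}(f(X))$ is an ultrafilter on $X$, and $\{\varnothing\}\cup f^{-1}(f(X))$ is a connected door topology on $X$.
   Context: $\mathcal{P}(X)$ denotes the power set of $X$. A topology on $X$ is a connected door topology if every proper nonempty subset of $X$ is either open or closed, but not both. *)

theory Defs
  imports "HOL-Analysis.Analysis"
begin

definition ultrafilter_on :: "'a set \<Rightarrow> 'a set set \<Rightarrow> bool" where
  "ultrafilter_on X U \<longleftrightarrow>
     U \<subseteq> Pow X \<and> X \<in> U \<and> {} \<notin> U \<and>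
     (\<forall>A\<in>U. \<forall>B\<in>U. A \<inter> B \<in> U) \<and>
     (\<forall>A\<in>U. \<forall>B. A \<subseteq> B \<and> B \<subseteq> X \<longrightarrow> B \<in> U) \<and>
     (\<forall>A. A \<subseteq> X \<longrightarrow> A \<in> U \<or> X - A \<in> U)"

definition topology_on :: "'a set \<Rightarrow> 'a set set \<Rightarrow> bool" where
  "topology_on X T \<longleftrightarrow> istopology (\<lambda>S. S \<in> T) \<and> \<Union>T = X"

definition connected_door_topology :: "'a set \<Rightarrow> 'a set set \<Rightarrow> bool" where
  "connected_door_topology X T \<longleftrightarrow> topology_on X T \<and>
     (\<forall>S. S \<subseteq> X \<and> S \<noteq> {} \<and> S \<noteq> X \<longrightarrow> ((S \<in> T) \<noteq> (X - S \<in> T)))"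

end

theory Submission
  imports Defs
begin

lemma no_zero_aux:
  fixes x y w u v :: complex
  assumes "x \<in> {u,v}" "y \<in> {u,v}" "w \<in> {u,v}" "x + y \<in> {u,v}" "x + w \<in> {u,v}"
    "y + w \<in> {u,v}" "x + y + w \<in> {u,v}" "u \<noteq> v" "u \<noteq> 0" "v \<noteq> 0"
  shows False
  using assms by (auto simp: algebra_simps)

theorem theorem2:
  fixes X :: "'a set" and f :: "'a set \<Rightarrow> complex" and z1 z2 :: complex
  assumes three: "\<exists>a b c. a \<in> X \<and> b \<in> X \<and> c \<in> X \<and> a \<noteq> b \<and> a \<noteq> c \<and> b \<noteq> c"
    and neq: "z1 \<noteq> z2"
    and surj: "f ` {A. A \<subseteq> X \<and> A \<noteq> {}} = {z1, z2}"
    and add: "\<And>A B. A \<subseteq> X \<Longrightarrow> B \<subseteq> X \<Longrightarrow> A \<noteq> {} \<Longrightarrow> B \<noteq> {} \<Longrightarrow> A \<inter> B = {}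
                \<Longrightarrow> f A + f B = f (A \<union> B)"
  shows "0 \<in> {z1, z2} \<and>
         ultrafilter_on X {A. A \<subseteq> X \<and> A \<noteq> {} \<and> f A = f X} \<and>
         connected_door_topology X ({{}} \<union> {A. A \<subseteq> X \<and> A \<noteq> {} \<and> f A = f X})"
proof -
  have V: "\<And>A. A \<subseteq> X \<Longrightarrow> A \<noteq> {} \<Longrightarrow> f A \<in> {z1,z2}" using surj by blast
  obtain a b c where abc: "a \<in> X" "b \<in> X" "c \<in> X" "a \<noteq> b" "a \<noteq> c" "b \<noteq> c" using three by blast
  have zero: "0 \<in> {z1,z2}"
  proof (rule ccontr)
    assume nz: "0 \<notin> {z1,z2}"
    have e1: "f {a} + f {b} = f {a,b}" using add[of "{a}" "{b}"] abc by (simp add: insert_commute)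
    have e2: "f {a} + f {c} = f {a,c}" using add[of "{a}" "{c}"] abc by (simp add: insert_commute)
    have e3: "f {b} + f {c} = f {b,c}" using add[of "{b}" "{c}"] abc by (simp add: insert_commute)
    have e4: "f {a,b} + f {c} = f {a,b,c}" using add[of "{a,b}" "{c}"] abc by (simp add: insert_commute)
    show False
      apply (rule no_zero_aux[of "f {a}" z1 z2 "f {b}" "f {c}"])
      using V abc e1 e2 e3 e4 neq nz by (auto simp del: insert_iff)
  qed
  obtain w where w: "w \<noteq> 0" "{z1,z2} = {0,w}" using zero neq by auto
  have V': "\<And>A. A \<subseteq> X \<Longrightarrow> A \<noteq> {} \<Longrightarrow> f A = 0 \<or> f A = w" using V w by auto
  have w2: "w + w \<noteq> 0" "w + w \<noteq> w" using w by auto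
  have disj: "\<And>A B. A \<subseteq> X \<Longrightarrow> B \<subseteq> X \<Longrightarrow> A \<noteq> {} \<Longrightarrow> B \<noteq> {} \<Longrightarrow> A \<inter> B = {}
       \<Longrightarrow> \<not> (f A = w \<and> f B = w)"
  proof
    fix A B assume h: "A \<subseteq> X" "B \<subseteq> X" "A \<noteq> {}" "B \<noteq> {}" "A \<inter> B = {}" "f A = w \<and> f B = w"
    have "f (A \<union> B) = w + w" using add[OF h(1-5)] h(6) by simp
    moreover have "A \<union> B \<subseteq> X" "A \<union> B \<noteq> {}" using h by auto
    ultimately show False using V' w2 by metis
  qed
  have Xne: "X \<noteq> {}" using abc by auto
  have fX: "f X = w"
  proof (rule ccontr)
    assume "f X \<noteq> w"
    hence fX0: "f X = 0" using V' Xne by blast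
    have all0: "\<And>A. A \<subseteq> X \<Longrightarrow> A \<noteq> {} \<Longrightarrow> f A = 0"
    proof -
      fix A assume A: "A \<subseteq> X" "A \<noteq> {}"
      show "f A = 0"
      proof (cases "A = X")
        case True thus ?thesis using fX0 by simp
      next
        case False
        hence ne: "X - A \<noteq> {}" using A by auto
        have s: "f A + f (X - A) = f X" using add[of A "X - A"] A ne
          by (metis Diff_disjoint Diff_subset Un_Diff_cancel sup.absorb2)
        show ?thesis using V'[OF A] V'[of "X - A"] ne s fX0 w by auto
      qed
    qed
    have "w \<in> f ` {A. A \<subseteq> X \<and> A \<noteq> {}}" using surj w by auto
    then show False using all0 w by auto
  qed
  define U where "U = {A. A \<subseteq> X \<and> A \<noteq> {} \<and> f A = f X}"
  have U: "\<And>A. A \<in> U \<longleftrightarrow> A \<subseteq> X \<and> A \<noteq> {} \<and> f A = w" unfolding U_def using fX by auto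
  have comp: "\<And>A. A \<subseteq> X \<Longrightarrow> A \<noteq> {} \<Longrightarrow> A \<noteq> X \<Longrightarrow> (f A = w) \<noteq> (f (X - A) = w)"
  proof -
    fix A assume A: "A \<subseteq> X" "A \<noteq> {}" "A \<noteq> X"
    hence ne: "X - A \<noteq> {}" by auto
    have s: "f A + f (X - A) = w" using add[of A "X - A"] A ne fX
      by (metis Diff_disjoint Diff_subset Un_Diff_cancel sup.absorb2)
    show "(f A = w) \<noteq> (f (X - A) = w)" using V'[OF A(1,2)] V'[of "X - A"] ne s w w2 by auto
  qed
  have up: "\<And>A B. A \<in> U \<Longrightarrow> A \<subseteq> B \<Longrightarrow> B \<subseteq> X \<Longrightarrow> B \<in> U"
  proof -
    fix A B assume h: "A \<in> U" "A \<subseteq> B" "B \<subseteq> X"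
    show "B \<in> U"
    proof (cases "B = A")
      case True thus ?thesis using h by simp
    next
      case False
      hence ne: "B - A \<noteq> {}" using h by auto
      have s: "f A + f (B - A) = f B" using add[of A "B - A"] h ne U
        by (metis Diff_disjoint Diff_subset Un_Diff_cancel sup.absorb2 order_trans)
      have "B \<noteq> {}" using ne by auto
      have fA: "f A = w" using U h by auto
      have BA: "B - A \<subseteq> X" using h by auto
      have "f B = w"
      proof (rule ccontr)
        assume "f B \<noteq> w"
        hence "f B = 0" using V'[of B] h \<open>B \<noteq> {}\<close> by auto
        thus False using s fA V'[OF BA ne] w w2 by auto
      qed
      thus ?thesis using U h \<open>B \<noteq> {}\<close> by auto
    qed
  qed
  have inter: "\<And>A B. A \<in> U \<Longrightarrow> B \<in> U \<Longrightarrow> A \<inter> B \<in> U"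
  proof -
    fix A B assume h: "A \<in> U" "B \<in> U"
    have ne: "A \<inter> B \<noteq> {}" using disj[of A B] h U by auto
    show "A \<inter> B \<in> U"
    proof (rule ccontr)
      assume nin: "A \<inter> B \<notin> U"
      hence f0: "f (A \<inter> B) = w \<Longrightarrow> False" using U h ne by auto
      show False
      proof (cases "A - B = {}")
        case True hence "A \<inter> B = A" by auto
        thus False using nin h by simp
      next
        case False
        have s: "f (A \<inter> B) + f (A - B) = f A" using add[of "A \<inter> B" "A - B"] h U ne False
          by (metis Diff_disjoint Int_Diff_Un inf_commute Int_Diff Diff_subset le_infI1 order_trans inf_le1 Un_Diff_Int)
        have AB: "A \<inter> B \<subseteq> X" using h U by auto
        have z: "f (A \<inter> B) = 0" using f0 V'[OF AB ne] by blast
        have fA: "f A = w" using h U by auto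
        have "f (A - B) = w" using s z fA by simp
        moreover have "(A - B) \<inter> B = {}" by auto
        ultimately show False using disj[of "A - B" B] h U False by auto
      qed
    qed
  qed
  have uf: "ultrafilter_on X U"
    unfolding ultrafilter_on_def
  proof (intro conjI ballI allI impI)
    show "U \<subseteq> Pow X" using U by auto
    show "X \<in> U" using U Xne fX by auto
    show "{} \<notin> U" using U by auto
  next
    fix A B assume "A \<in> U" "B \<in> U" thus "A \<inter> B \<in> U" by (rule inter)
  next
    fix A B assume "A \<in> U" "A \<subseteq> B \<and> B \<subseteq> X" thus "B \<in> U" using up by blast
  next
    fix A assume A: "A \<subseteq> X"
    show "A \<in> U \<or> X - A \<in> U"
    proof (cases "A = {}")
      case True thus ?thesis using U Xne fX by auto
    next
      case False
      show ?thesis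
      proof (cases "A = X")
        case True thus ?thesis using U Xne fX by auto
      next
        case F2: False
        thus ?thesis using comp[OF A False F2] U A False by auto
      qed
    qed
  qed
  have top: "topology_on X ({{}} \<union> U)"
    unfolding topology_on_def istopology_def
  proof (intro conjI allI impI)
    fix S T assume "S \<in> {{}} \<union> U" "T \<in> {{}} \<union> U"
    thus "S \<inter> T \<in> {{}} \<union> U" using inter by auto
  next
    fix K assume K: "\<forall>k\<in>K. k \<in> {{}} \<union> U"
    show "\<Union>K \<in> {{}} \<union> U"
    proof (cases "\<exists>k\<in>K. k \<in> U")
      case True
      then obtain k where "k \<in> K" "k \<in> U" by blast
      moreover have "\<Union>K \<subseteq> X" using K U by auto
      ultimately show ?thesis using up[of k "\<Union>K"] by auto
    next
      case False thus ?thesis using K by auto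
    qed
  next
    show "\<Union>({{}} \<union> U) = X" using U Xne fX by auto
  qed
  have door: "\<forall>S. S \<subseteq> X \<and> S \<noteq> {} \<and> S \<noteq> X \<longrightarrow> ((S \<in> {{}} \<union> U) \<noteq> (X - S \<in> {{}} \<union> U))"
  proof (intro allI impI)
    fix S assume S: "S \<subseteq> X \<and> S \<noteq> {} \<and> S \<noteq> X"
    hence "X - S \<noteq> {}" by auto
    thus "(S \<in> {{}} \<union> U) \<noteq> (X - S \<in> {{}} \<union> U)" using comp[of S] S U by auto
  qed
  show ?thesis using zero uf top door unfolding U_def connected_door_topology_def by auto
qed

end
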